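(* Let $k$ be a non-negative integer, $a_0,\dots,a_k\in\mathbb{C}$, and suppose $\Lambda=\sum_{i=0}^{k}a_i(Dx)^iD$ is a lowering operator. Let $\{B_n\}_{n\ge0}$ be a monic polynomial sequence with dual sequence $\{u_n\}_{n\ge0}$, let $$B^{[1]}_n(x;\Lambda)=(n+1)^{-1}\Big(\sum_{i=0}^{k}a_i(n+1)^i\Big)^{-1}(\Lambda B_{n+1})(x),\quad n\ge0,$$ and let $\{u^{[1]}_n(\Lambda)\}_{n\ge0}$ be the dual sequence of $\{B^{[1]}_n(\cdot;\Lambda)\}_{n\ge0}$. Then for all $n\ge0$, $${}^t\Lambda\big(u^{[1]}_n(\Lambda)\big)=\rho_nu_{n+1},\qquad \rho_n=(n+1)\sum_{i=0}^{k}a_i(n+1)^i,$$ where ${}^t\Lambda=\sum_{i=0}^{k}a_i(-1)^{i+1}(Dx)^iD$ acting on forms.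
   Context: $\mathcal{P}$ is the space of complex polynomials, $\mathcal{P}'$ its algebraic dual, $\langle u,p\rangle$ the action of a form on a polynomial. $D$ is the derivative, $x$ multiplication by $x$, products are compositions. A lowering operator is a linear map $\mathcal{O}:\mathcal{P}\to\mathcal{P}$ with $\mathcal{O}(1)=0$ and $\deg\mathcal{O}(x^n)=n-1$, $n\ge1$. A monic polynomial sequence (MPS) is a sequence $\{B_n\}_{n\ge0}$ with $B_n$ monic of degree $n$; its dual sequence is the unique $\{u_n\}\subset\mathcal{P}'$ with $\langle u_n,B_m\rangle=\delta_{n,m}$. Transposes: $\langle {}^tT u,p\rangle=\langle u,Tp\rangle$; on forms $\langle Du,p\rangle=-\langle u,p'\rangle$ and $\langle xu,p\rangle=\langle u,xp\rangle$. *)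

theory Defs
  imports "HOL-Computational_Algebra.Polynomial"
begin

type_synonym form = "complex poly \<Rightarrow> complex"

definition lin_op :: "(complex poly \<Rightarrow> complex poly) \<Rightarrow> bool" where
  "lin_op T \<longleftrightarrow> (\<forall>p q. T (p + q) = T p + T q) \<and> (\<forall>c p. T (smult c p) = smult c (T p))"

definition lowering_op :: "(complex poly \<Rightarrow> complex poly) \<Rightarrow> bool" where
  "lowering_op T \<longleftrightarrow> lin_op T \<and> T 1 = 0 \<and>
     (\<forall>n\<ge>1. T (monom 1 n) \<noteq> 0 \<and> degree (T (monom 1 n)) = n - 1)"

definition is_form :: "form \<Rightarrow> bool" where
  "is_form u \<longleftrightarrow> (\<forall>p q. u (p + q) = u p + u q) \<and> (\<forall>c p. u (smult c p) = c * u p)"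

definition MPS :: "(nat \<Rightarrow> complex poly) \<Rightarrow> bool" where
  "MPS B \<longleftrightarrow> (\<forall>n. degree (B n) = n \<and> lead_coeff (B n) = 1)"

definition dual_seq :: "(nat \<Rightarrow> complex poly) \<Rightarrow> (nat \<Rightarrow> form) \<Rightarrow> bool" where
  "dual_seq B u \<longleftrightarrow> (\<forall>n. is_form (u n)) \<and> (\<forall>n m. u n (B m) = (if n = m then 1 else 0))"

definition polyD :: "complex poly \<Rightarrow> complex poly" where "polyD p = pderiv p"
definition polyX :: "complex poly \<Rightarrow> complex poly" where "polyX p = [:0, 1:] * p"

definition Lam :: "nat \<Rightarrow> (nat \<Rightarrow> complex) \<Rightarrow> complex poly \<Rightarrow> complex poly" where
  "Lam k a p = (\<Sum>i\<le>k. smult (a i) (((polyD \<circ> polyX) ^^ i) (polyD p)))"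

definition formD :: "form \<Rightarrow> form" where "formD u = (\<lambda>p. - u (pderiv p))"
definition formX :: "form \<Rightarrow> form" where "formX u = (\<lambda>p. u ([:0, 1:] * p))"

definition tLam :: "nat \<Rightarrow> (nat \<Rightarrow> complex) \<Rightarrow> form \<Rightarrow> form" where
  "tLam k a u = (\<lambda>p. \<Sum>i\<le>k. a i * (-1) ^ (i + 1) * (((formD \<circ> formX) ^^ i) (formD u)) p)"

definition B1 :: "nat \<Rightarrow> (nat \<Rightarrow> complex) \<Rightarrow> (nat \<Rightarrow> complex poly) \<Rightarrow> nat \<Rightarrow> complex poly" where
  "B1 k a B n = smult (inverse (of_nat (n + 1) * (\<Sum>i\<le>k. a i * of_nat (n + 1) ^ i)))
                      (Lam k a (B (n + 1)))"

end

theory Submission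
  imports Defs
begin

lemma polyD_eq: "polyD = pderiv" by (rule ext) (simp add: polyD_def)

lemma X_monom: "polyX (monom c n) = monom c (Suc n)"
  by (simp add: polyX_def monom_altdef mult.left_commute)

lemma DX_pow_monom: "((polyD \<circ> polyX) ^^ i) (monom c n) = monom (c * of_nat (Suc n) ^ i) n"
  by (induction i) (simp_all add: X_monom polyD_def pderiv_monom mult_ac)

lemma Lam_monom: "Lam k a (monom 1 (Suc m)) =
   smult (of_nat (m + 1) * (\<Sum>i\<le>k. a i * of_nat (m + 1) ^ i)) (monom 1 m)"
proof -
  have "Lam k a (monom 1 (Suc m)) = (\<Sum>i\<le>k. smult (a i * of_nat (m+1) * of_nat (m + 1) ^ i) (monom 1 m))"
    unfolding Lam_def polyD_def pderiv_monom
    by (intro sum.cong refl) (simp add: DX_pow_monom[unfolded polyD_eq] smult_monom mult_ac)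
  also have "\<dots> = smult (\<Sum>i\<le>k. a i * of_nat (m+1) * of_nat (m + 1) ^ i) (monom 1 m)"
    by (simp add: smult_sum)
  finally show ?thesis by (simp add: sum_distrib_left mult_ac)
qed

lemma form_zero: "is_form u \<Longrightarrow> u 0 = 0"
  unfolding is_form_def by (metis add_cancel_right_right add_0)

lemma form_sum: assumes "is_form u" shows "u (\<Sum>i\<le>(k::nat). f i) = (\<Sum>i\<le>k. u (f i))"
proof (induction k)
  case 0 then show ?case by simp
next
  case (Suc k) then show ?case using assms unfolding is_form_def by simp
qed

lemma D_XD: "polyD (((polyX \<circ> polyD) ^^ i) p) = ((polyD \<circ> polyX) ^^ i) (polyD p)"
  by (induction i) simp_all

lemma formT_pow: "(((formD \<circ> formX) ^^ i) v) p = (-1) ^ i * v (((polyX \<circ> polyD) ^^ i) p)"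
proof (induction i arbitrary: p)
  case 0 then show ?case by simp
next
  case (Suc i)
  have "(((formD \<circ> formX) ^^ Suc i) v) p = - (((formD \<circ> formX) ^^ i) v) (polyX (polyD p))"
    by (simp add: formD_def formX_def polyX_def polyD_def)
  also have "\<dots> = (-1) ^ Suc i * v (((polyX \<circ> polyD) ^^ i) ((polyX \<circ> polyD) p))"
    by (subst Suc.IH) simp
  also have "\<dots> = (-1) ^ Suc i * v (((polyX \<circ> polyD) ^^ Suc i) p)"
    by (simp only: funpow_Suc_right o_apply)
  finally show ?case .
qed

lemma tLam_eq: "is_form u \<Longrightarrow> tLam k a u p = u (Lam k a p)"
proof -
  assume u: "is_form u"
  have "tLam k a u p = (\<Sum>i\<le>k. u (smult (a i) (((polyD \<circ> polyX) ^^ i) (polyD p))))"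
    unfolding tLam_def formT_pow
    using u D_XD[unfolded polyD_def] by (intro sum.cong refl) (simp add: formD_def polyD_eq is_form_def)
  also have "\<dots> = u (Lam k a p)" unfolding Lam_def using form_sum[OF u] by simp
  finally show ?thesis .
qed

lemma agree:
  fixes f g :: "complex poly \<Rightarrow> complex"
  assumes f: "is_form f" and g: "is_form g" and B: "MPS B" and eq: "\<And>m. f (B m) = g (B m)"
  shows "f p = g p"
proof (induction "degree p" arbitrary: p rule: less_induct)
  case less
  define d where "d = degree p"
  define c where "c = lead_coeff p"
  define q where "q = p - smult c (B d)"
  have Bdd: "degree (B d) = d \<and> lead_coeff (B d) = 1" using B unfolding MPS_def by blast
  then have Bd: "degree (B d) = d" "lead_coeff (B d) = 1" by blast+
  have Bd': "coeff (B d) d = 1" using Bd by metis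
  have pq: "p = q + smult c (B d)" by (simp add: q_def)
  have fg: "f (smult c (B d)) = g (smult c (B d))" using f g eq unfolding is_form_def by simp
  have "f q = g q"
  proof (cases "q = 0")
    case True then show ?thesis using form_zero[OF f] form_zero[OF g] by (simp only:)
  next
    case False
    have "degree (smult c (B d)) \<le> d" using degree_smult_le[of c "B d"] Bd(1) by simp
    then have dq: "degree q \<le> d" unfolding q_def
      by (intro degree_diff_le) (simp_all add: d_def)
    have "coeff q d = 0" unfolding q_def c_def using Bd' d_def by (simp only: coeff_diff coeff_smult) simp
    then have "degree q \<noteq> d" using False by (metis leading_coeff_0_iff)
    then have "degree q < degree p" using dq unfolding d_def by linarith
    then show ?thesis by (rule less)
  qed
  moreover have "f p = f q + f (smult c (B d))" "g p = g q + g (smult c (B d))"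
    using f g unfolding is_form_def by (metis pq)+
  ultimately show ?case using fg by simp
qed

theorem proposition4:
  fixes k :: nat and a :: "nat \<Rightarrow> complex"
    and B :: "nat \<Rightarrow> complex poly" and u u1 :: "nat \<Rightarrow> form"
  assumes "lowering_op (Lam k a)"
    and "MPS B"
    and "dual_seq B u"
    and "dual_seq (B1 k a B) u1"
  shows "\<forall>n. tLam k a (u1 n) =
              (\<lambda>p. (of_nat (n + 1) * (\<Sum>i\<le>k. a i * of_nat (n + 1) ^ i)) * u (Suc n) p)"
proof
  fix n
  define \<rho> :: "nat \<Rightarrow> complex" where "\<rho> m = of_nat (m + 1) * (\<Sum>i\<le>k. a i * of_nat (m + 1) ^ i)" for m
  have lin: "lin_op (Lam k a)" and L1: "Lam k a 1 = 0" using assms(1) unfolding lowering_op_def by auto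
  have rho: "\<rho> m \<noteq> 0" for m
  proof
    assume "\<rho> m = 0"
    then have "Lam k a (monom 1 (Suc m)) = 0" using Lam_monom[of k a m] \<rho>_def by simp
    then show False using assms(1) unfolding lowering_op_def by auto
  qed
  have u1f: "is_form (u1 n)" and uf: "is_form (u (Suc n))"
    using assms(3,4) unfolding dual_seq_def by auto
  have f: "is_form (\<lambda>p. u1 n (Lam k a p))"
    using u1f lin unfolding is_form_def lin_op_def by simp
  have g: "is_form (\<lambda>p. \<rho> n * u (Suc n) p)"
    using uf unfolding is_form_def by (simp add: algebra_simps)
  have B0: "B 0 = 1" using assms(2) unfolding MPS_def
    by (metis degree_eq_zeroE lead_coeff_pCons(2) one_pCons)
  have eq: "u1 n (Lam k a (B m)) = \<rho> n * u (Suc n) (B m)" for m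
  proof (cases m)
    case 0
    have "u (Suc n) (B 0) = 0" using assms(3) unfolding dual_seq_def by simp
    then show ?thesis using 0 B0 L1 form_zero[OF u1f] by simp
  next
    case (Suc j)
    have "Lam k a (B (Suc j)) = smult (\<rho> j) (B1 k a B j)"
      proof -
      have "B1 k a B j = smult (inverse (\<rho> j)) (Lam k a (B (Suc j)))"
        unfolding B1_def \<rho>_def by simp
      then have "smult (\<rho> j) (B1 k a B j) = smult (\<rho> j * inverse (\<rho> j)) (Lam k a (B (Suc j)))"
        by (simp only: smult_smult)
      also have "\<rho> j * inverse (\<rho> j) = 1" using rho[of j] by simp
      finally show ?thesis by simp
    qed
    then have "u1 n (Lam k a (B m)) = \<rho> j * (if n = j then 1 else 0)"
      using u1f assms(4) Suc unfolding is_form_def dual_seq_def by simp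
    then show ?thesis using assms(3) Suc unfolding dual_seq_def by auto
  qed
  have "\<forall>p. u1 n (Lam k a p) = \<rho> n * u (Suc n) p"
    using agree[OF f g assms(2)] eq by blast
  then show "tLam k a (u1 n) = (\<lambda>p. (of_nat (n + 1) * (\<Sum>i\<le>k. a i * of_nat (n + 1) ^ i)) * u (Suc n) p)"
    using tLam_eq[OF u1f] by (simp add: \<rho>_def fun_eq_iff)
qed

end
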